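(* Let $\gamma(s)=(X_1,\dots,X_r,Y_1,\dots,Y_r)(s)$, $s\in\mathbb R$, be a Ricci-flat trajectory (as defined in the context). Fix $s^*\in\mathbb R$ and define $t(s)=\int_{-\infty}^{s}\exp\!\big(\int_{s^*}^{\sigma}\mathcal G\big)\,d\sigma$ and $g_i(s)=\frac{\sqrt{d_i}}{Y_i(s)}\exp\!\big(\int_{s^*}^{s}\mathcal G\big)$. Then $t(s)\to+\infty$ as $s\to+\infty$; consequently the corresponding Ricci-flat metric $dt^2+g_1^2d\theta^2+\sum_{i\ge2}g_i^2h_i$ is complete.
   Context: Fix $r\ge2$, $d_1=1$, $\lambda_1=0$, and integers $d_i\ge2$ and reals $\lambda_i>0$ for $i=2,\dots,r$ (dimensions and Einstein constants of Einstein manifolds $(M_i,h_i)$); $n=\sum_i d_i$. Consider the ODE system, with $'=d/ds$ and $\mathcal G=\sum_{j=1}^rX_j^2$: $X_i'=X_i(\mathcal G-1)+\frac{\lambda_iY_i^2}{\sqrt{d_i}}$, $Y_i'=Y_i\big(\mathcal G-\frac{X_i}{\sqrt{d_i}}\big)$, $i=1,\dots,r$. Let $\mathcal L=\sum_iX_i^2+\sum_i\lambda_iY_i^2-1$, $\mathcal H=\sum_i\sqrt{d_i}X_i$, and $P_0$ the point $X_1=Y_1=1$, $X_i=Y_i=0$ ($i\ge2$). A Ricci-flat trajectory is a non-constant solution defined for all $s\in\mathbb R$ with $\gamma(s)\to P_0$ as $s\to-\infty$, contained in $\{\mathcal L=0,\mathcal H=1\}$, and with $Y_i(s)>0$ for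 all $i$ and $s$. *)

theory Defs
  imports "HOL-Analysis.Analysis"
begin

text \<open>Indices i range over {1..r}. A state is given by two functions
  X, Y :: real \<Rightarrow> nat \<Rightarrow> real (time s, index i); values at indices outside
  {1..r} are irrelevant.\<close>

definition GG :: "nat \<Rightarrow> (real \<Rightarrow> nat \<Rightarrow> real) \<Rightarrow> real \<Rightarrow> real" where
  "GG r X s = (\<Sum>j=1..r. (X s j)^2)"

definition ricci_flat_trajectory ::
  "nat \<Rightarrow> (nat \<Rightarrow> nat) \<Rightarrow> (nat \<Rightarrow> real) \<Rightarrow> (real \<Rightarrow> nat \<Rightarrow> real) \<Rightarrow> (real \<Rightarrow> nat \<Rightarrow> real) \<Rightarrow> bool"
where
  "ricci_flat_trajectory r d lam X Y \<longleftrightarrow>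
     \<comment> \<open>solution of the ODE system on all of R\<close>
     (\<forall>s. \<forall>i\<in>{1..r}.
        ((\<lambda>u. X u i) has_real_derivative
            (X s i * (GG r X s - 1) + lam i * (Y s i)^2 / sqrt (real (d i)))) (at s) \<and>
        ((\<lambda>u. Y u i) has_real_derivative
            (Y s i * (GG r X s - X s i / sqrt (real (d i))))) (at s)) \<and>
     \<comment> \<open>non-constant\<close>
     (\<exists>s1 s2. \<exists>i\<in>{1..r}. X s1 i \<noteq> X s2 i \<or> Y s1 i \<noteq> Y s2 i) \<and>
     \<comment> \<open>tends to P0 as s \<rightarrow> -\<infinity>\<close>
     (\<forall>i\<in>{1..r}. ((\<lambda>s. X s i) \<longlongrightarrow> (if i = 1 then 1 else 0)) at_bot \<and>
                  ((\<lambda>s. Y s i) \<longlongrightarrow> (if i = 1 then 1 else 0)) at_bot) \<and>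
     \<comment> \<open>contained in {L = 0, H = 1}\<close>
     (\<forall>s. (\<Sum>i=1..r. (X s i)^2) + (\<Sum>i=1..r. lam i * (Y s i)^2) - 1 = 0) \<and>
     (\<forall>s. (\<Sum>i=1..r. sqrt (real (d i)) * X s i) = 1) \<and>
     \<comment> \<open>positivity of Y\<close>
     (\<forall>s. \<forall>i\<in>{1..r}. Y s i > 0)"

end

theory Submission
  imports Defs
begin

theorem lemma4p1:
  fixes r :: nat and d :: "nat \<Rightarrow> nat" and lam :: "nat \<Rightarrow> real"
    and X Y :: "real \<Rightarrow> nat \<Rightarrow> real" and s_star :: real
  assumes "r \<ge> 2" and "d 1 = 1" and "lam 1 = 0"
    and "\<forall>i\<in>{2..r}. d i \<ge> 2 \<and> lam i > 0"
    and "ricci_flat_trajectory r d lam X Y"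
  shows "(\<forall>s. interval_lebesgue_integrable lborel MInfty (ereal s)
                (\<lambda>\<sigma>. exp (LBINT u=s_star..\<sigma>. GG r X u)))
         \<and> filterlim (\<lambda>s. LBINT \<sigma>=MInfty..(ereal s). exp (LBINT u=s_star..\<sigma>. GG r X u))
                     at_top at_top"
proof -
  note R = assms(5)[unfolded ricci_flat_trajectory_def]
  define G where "G = GG r X"
  have contX: "isCont (\<lambda>u. X u i) s" if "i \<in> {1..r}" for i s
    using R that DERIV_isCont by blast
  have contG: "isCont G s" for s
    unfolding G_def GG_def by (intro continuous_intros contX) auto
  define D where "D = (\<Sum>i=1..r. sqrt (real (d i)))"
  have DG: "1 \<le> D * sqrt (G s)" for s
  proof -
    have "1 = (\<Sum>i=1..r. sqrt (real (d i)) * X s i)" using R by simp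
    also have "\<dots> \<le> (\<Sum>i=1..r. sqrt (real (d i)) * sqrt (G s))"
    proof (rule sum_mono)
      fix i assume i: "i \<in> {1..r}"
      have "(X s i)^2 \<le> G s" unfolding G_def GG_def
        by (rule member_le_sum[of i "{1..r}" "\<lambda>j. (X s j)^2"]) (use i in auto)
      then have "\<bar>X s i\<bar> \<le> sqrt (G s)" using real_sqrt_le_mono by fastforce
      then show "sqrt (real (d i)) * X s i \<le> sqrt (real (d i)) * sqrt (G s)"
        by (smt (verit) mult_left_mono real_sqrt_ge_zero of_nat_0_le_iff)
    qed
    also have "\<dots> = D * sqrt (G s)" unfolding D_def by (simp add: sum_distrib_right)
    finally show ?thesis .
  qed
  have D0: "D \<ge> 0" unfolding D_def by (intro sum_nonneg) auto
  have Dpos: "D > 0" using DG[of 0] D0 by (cases "D = 0") auto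
  define c where "c = 1 / D^2"
  have cpos: "c > 0" unfolding c_def using Dpos by simp
  have Gc: "G s \<ge> c" for s
  proof -
    have G0: "G s \<ge> 0" unfolding G_def GG_def by (intro sum_nonneg) auto
    have "1 / D \<le> sqrt (G s)" using DG[of s] Dpos by (simp add: field_simps mult.commute)
    then have "(1/D)^2 \<le> (sqrt (G s))^2" by (intro power_mono) (use Dpos in auto)
    then show ?thesis using G0 unfolding c_def by (simp add: power_divide)
  qed
  define F where "F = (\<lambda>\<sigma>::real. LBINT u=s_star..\<sigma>. G u)"
  have derF: "(F has_real_derivative G x) (at x)" for x
  proof -
    define a where "a = min x s_star - 1"
    define b where "b = max x s_star + 1"
    have "(F has_vector_derivative G x) (at x within {a..b})"
      unfolding F_def
      by (rule interval_integral_FTC2) (auto simp: a_def b_def intro!: continuous_at_imp_continuous_on contG)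
    moreover have "at x within {a..b} = at x"
      by (rule at_within_Icc_at) (auto simp: a_def b_def)
    ultimately show ?thesis by (simp add: has_real_derivative_iff_has_vector_derivative)
  qed
  have contF: "isCont F x" for x using derF DERIV_isCont by blast
  have monoF: "F x - c * x \<le> F y - c * y" if "x \<le> y" for x y
  proof (rule DERIV_nonneg_imp_nondecreasing[OF that])
    fix z
    have "((\<lambda>x. F x - c * x) has_real_derivative G z - c) (at z)"
      by (auto intro!: derivative_eq_intros derF)
    then show "\<exists>y. ((\<lambda>x. F x - c * x) has_real_derivative y) (at z) \<and> 0 \<le> y"
      using Gc[of z] by auto
  qed
  have F0: "F s_star = 0" unfolding F_def by simp
  have Fpos: "F x \<ge> 0" if "x \<ge> s_star" for x
  proof -
    have "c * s_star \<le> c * x" using that cpos by (intro mult_left_mono) auto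
    then show ?thesis using monoF[OF that] F0 by linarith
  qed
  have measF [measurable]: "(\<lambda>x. exp (F x)) \<in> borel_measurable borel"
    by (intro borel_measurable_continuous_onI continuous_at_imp_continuous_on ballI continuous_intros contF)
  have integ: "set_integrable lborel (einterval MInfty (ereal s)) (\<lambda>x. exp (F x))" for s
  proof -
    define M where "M = exp (F s - c * s)"
    have "set_integrable lborel (einterval (-\<infinity>) (ereal s)) (\<lambda>x. exp (c * x))"
    proof (rule interval_integral_FTC_nonneg(1)[where F = "\<lambda>x. exp (c * x) / c" and A = 0 and B = "exp (c * s) / c"])
      show "\<And>x. DERIV (\<lambda>x. exp (c * x) / c) x :> exp (c * x)"
        using cpos by (auto intro!: derivative_eq_intros)
      show "(((\<lambda>x. exp (c * x) / c) \<circ> real_of_ereal) \<longlongrightarrow> 0) (at_right (-\<infinity>))"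
      proof -
        have "filterlim (\<lambda>x. c*x) at_bot at_bot"
          by (rule filterlim_tendsto_pos_mult_at_bot[OF tendsto_const cpos filterlim_ident])
        then have "((\<lambda>x. exp (c*x)) \<longlongrightarrow> 0) at_bot" by (rule filterlim_compose[OF exp_at_bot])
        from tendsto_divide[OF this tendsto_const[of c]] cpos show ?thesis by (simp add: ereal_tendsto_simps)
      qed
      show "(((\<lambda>x. exp (c * x) / c) \<circ> real_of_ereal) \<longlongrightarrow> exp (c * s) / c) (at_left (ereal s))"
        unfolding ereal_tendsto_simps
        using cpos by (auto intro!: tendsto_eq_intros)
    qed (auto simp del: ereal_less_eq)
    then have I: "set_integrable lborel (einterval MInfty (ereal s)) (\<lambda>x. M * exp (c * x))"
      by simp
    show ?thesis
    proof (rule set_integrable_bound[OF I])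
      show "set_borel_measurable lborel (einterval MInfty (ereal s)) (\<lambda>x. exp (F x))"
        unfolding set_borel_measurable_def by (intro borel_measurable_scaleR borel_measurable_indicator) (auto simp: measF)
      show "AE x in lborel. x \<in> einterval MInfty (ereal s) \<longrightarrow> norm (exp (F x)) \<le> norm (M * exp (c * x))"
      proof (rule AE_I2, rule impI)
        fix x assume "x \<in> einterval MInfty (ereal s)"
        then have "x \<le> s" by (auto simp: einterval_def)
        then have "F x - c * x \<le> F s - c * s" by (rule monoF)
        then have "exp (F x) \<le> M * exp (c * x)"
          unfolding M_def by (simp add: exp_add[symmetric])
        then show "norm (exp (F x)) \<le> norm (M * exp (c * x))" unfolding M_def by simp
      qed
    qed
  qed
  have part1: "interval_lebesgue_integrable lborel MInfty (ereal s) (\<lambda>\<sigma>. exp (F \<sigma>))" for s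
    unfolding interval_lebesgue_integrable_def using integ by simp
  have lower: "s - s_star \<le> (LBINT \<sigma>=MInfty..(ereal s). exp (F \<sigma>))" if "s \<ge> s_star" for s
  proof -
    have "(LBINT \<sigma>=MInfty..ereal s_star. exp (F \<sigma>)) + (LBINT \<sigma>=ereal s_star..ereal s. exp (F \<sigma>))
       = (LBINT \<sigma>=MInfty..(ereal s). exp (F \<sigma>))"
      by (rule interval_integral_sum) (use that part1 in \<open>auto simp: min_def max_def\<close>)
    moreover have "0 \<le> (LBINT \<sigma>=MInfty..ereal s_star. exp (F \<sigma>))"
      unfolding interval_lebesgue_integral_def set_lebesgue_integral_def
      by (auto intro!: integral_nonneg_AE)
    moreover have "s - s_star \<le> (LBINT \<sigma>=ereal s_star..ereal s. exp (F \<sigma>))"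
    proof -
      have "(LBINT \<sigma>=ereal s_star..ereal s. 1) \<le> (LBINT \<sigma>=ereal s_star..ereal s. exp (F \<sigma>))"
        unfolding interval_lebesgue_integral_def using that
        apply simp
        apply (rule set_integral_mono)
        subgoal using interval_integral_const(1)[of s_star s 1] that
          by (simp add: interval_lebesgue_integrable_def)
        subgoal using interval_integrable_isCont[of s_star s "\<lambda>x. exp (F x)"] that
          by (simp add: interval_lebesgue_integrable_def contF)
        subgoal for x
          using Fpos[of x] by (auto simp: einterval_def)
        done
      then show ?thesis using interval_integral_const(2)[of s_star s 1] by simp
    qed
    ultimately show ?thesis by linarith
  qed
  have part2: "filterlim (\<lambda>s. LBINT \<sigma>=MInfty..(ereal s). exp (F \<sigma>)) at_top at_top"
  proof (rule filterlim_at_top_mono)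
    show "filterlim (\<lambda>s. s - s_star) at_top at_top"
      by (rule filterlim_tendsto_add_at_top[OF tendsto_const filterlim_ident, of "- s_star", simplified])
    show "\<forall>\<^sub>F s in at_top. s - s_star \<le> (LBINT \<sigma>=MInfty..(ereal s). exp (F \<sigma>))"
      using eventually_ge_at_top[of s_star] by eventually_elim (rule lower)
  qed
  show ?thesis using part1 part2 unfolding F_def G_def by blast
qed

end
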